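(* Let $\Omega$ be a compact Riemannian manifold without boundary, let $K:\Omega\times\Omega\to\mathbb{R}$ be continuous, and let $\beta>0$. Define for $p\in\mathcal{P}(\Omega)$ $$F_{p,\beta}(p)=\beta^{-1}\log Z_q(p)+\beta^{-1}S(p),\qquad Z_q(p)=\int_\Omega\exp\Big(\beta\int_\Omega K(x,y)p(x)\,dx\Big)dy,\qquad S(p)=\int_\Omega p\log p\,dx.$$ Then for any two distinct probability densities $p_1\neq p_2$ on $\Omega$ with $S(p_1),S(p_2)<\infty$ and any $\lambda\in(0,1)$, $$F_{p,\beta}(\lambda p_1+(1-\lambda)p_2)<\lambda F_{p,\beta}(p_1)+(1-\lambda)F_{p,\beta}(p_2).$$
   Context: $\mathcal{P}(\Omega)$ is the set of probability distributions on $\Omega$, identified with densities with respect to the Riemannian volume measure; $S(p)=+\infty$ if $p$ has no density. *)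

theory Defs
  imports "HOL-Analysis.Analysis"
begin

definition plogp :: "real \<Rightarrow> real" where
  "plogp t = (if t = 0 then 0 else t * ln t)"

definition is_density :: "'a measure \<Rightarrow> ('a \<Rightarrow> real) \<Rightarrow> bool" where
  "is_density M p \<longleftrightarrow> p \<in> borel_measurable M \<and> (\<forall>x\<in>space M. 0 \<le> p x)
     \<and> integrable M p \<and> (\<integral>x. p x \<partial>M) = 1"

text \<open>Entropy S(p) = int p log p, equal to +infinity when p log p is not integrable
  (it is always bounded below on a finite measure space).\<close>
definition entropy :: "'a measure \<Rightarrow> ('a \<Rightarrow> real) \<Rightarrow> ereal" where
  "entropy M p = (if integrable M (\<lambda>x. plogp (p x)) then ereal (\<integral>x. plogp (p x) \<partial>M) else \<infinity>)"

definition partition_fn :: "'a measure \<Rightarrow> ('a \<Rightarrow> 'a \<Rightarrow> real) \<Rightarrow> real \<Rightarrow> ('a \<Rightarrow> real) \<Rightarrow> real" where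
  "partition_fn M K \<beta> p = (\<integral>y. exp (\<beta> * (\<integral>x. K x y * p x \<partial>M)) \<partial>M)"

definition free_energy :: "'a measure \<Rightarrow> ('a \<Rightarrow> 'a \<Rightarrow> real) \<Rightarrow> real \<Rightarrow> ('a \<Rightarrow> real) \<Rightarrow> ereal" where
  "free_energy M K \<beta> p = ereal (ln (partition_fn M K \<beta> p) / \<beta>) + entropy M p / ereal \<beta>"

end

theory Submission
  imports Defs
begin


lemma ln_strict: "0 < (x::real) \<Longrightarrow> x \<noteq> 1 \<Longrightarrow> ln x < x - 1"
  using ln_le_minus_one ln_eq_minus_one by fastforce

lemma plogp_ge: assumes "0 \<le> t" "0 < m" shows "plogp t \<ge> t * ln m + (t - m)"
  and "t \<noteq> m \<Longrightarrow> plogp t > t * ln m + (t - m)"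
proof -
  have *: "plogp t > t * ln m + (t - m)" if "t \<noteq> m"
  proof (cases "t = 0")
    case True thus ?thesis using assms by (simp add: plogp_def)
  next
    case False
    hence tp: "t > 0" using assms by simp
    have "ln (m/t) < m/t - 1" using ln_strict[of "m/t"] tp assms that by (simp add: field_simps)
    hence "t * ln (m/t) < t * (m/t - 1)" using tp by simp
    moreover have "t * (m/t - 1) = m - t" using tp by (simp add: field_simps)
    moreover have "t * ln(m/t) = t*(ln m - ln t)" using tp assms by (simp add: ln_div)
    ultimately have "t * (ln m - ln t) < m - t" by simp
    thus ?thesis using False by (simp add: plogp_def algebra_simps)
  qed
  show "plogp t \<ge> t * ln m + (t - m)"
    using * by (cases "t = m") (auto simp: plogp_def)
  show "t \<noteq> m \<Longrightarrow> plogp t > t * ln m + (t - m)" using * .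
qed

lemma plogp_convex:
  assumes "0 \<le> a" "0 \<le> b" "0 < l" "l < 1"
  shows "plogp (l*a + (1-l)*b) \<le> l * plogp a + (1-l) * plogp b"
    and "a \<noteq> b \<Longrightarrow> plogp (l*a + (1-l)*b) < l * plogp a + (1-l) * plogp b"
proof -
  define m where "m = l*a + (1-l)*b"
  have m0: "0 \<le> m" using assms by (simp add: m_def)
  show "a \<noteq> b \<Longrightarrow> plogp (l*a + (1-l)*b) < l * plogp a + (1-l) * plogp b"
  proof -
    assume ab: "a \<noteq> b"
    have mp: "m > 0"
    proof (cases "a > 0")
      case True
      then have "l*a > 0" using assms by simp
      moreover have "(1-l)*b \<ge> 0" using assms by simp
      ultimately show ?thesis unfolding m_def by linarith
    next
      case False
      then have "b > 0" using assms ab by linarith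
      then have "(1-l)*b > 0" using assms by simp
      moreover have "l*a \<ge> 0" using assms by simp
      ultimately show ?thesis unfolding m_def by linarith
    qed
    have "m - a = (1-l)*(b-a)" by (simp add: m_def algebra_simps)
    moreover have "(1-l)*(b-a) \<noteq> 0" using ab assms by simp
    ultimately have "a \<noteq> m" by auto
    hence A: "plogp a > a * ln m + (a - m)" using plogp_ge(2)[OF assms(1) mp] by simp
    have B: "plogp b \<ge> b * ln m + (b - m)" using plogp_ge(1)[OF assms(2) mp] by simp
    have A': "l * plogp a > l * (a * ln m + (a - m))" using A assms by simp
    have B': "(1-l) * plogp b \<ge> (1-l) * (b * ln m + (b - m))" using B assms by (intro mult_left_mono) auto
    have "l * plogp a + (1-l) * plogp b > l * (a * ln m + (a - m)) + (1-l) * (b * ln m + (b - m))"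
      using A' B' by linarith
    also have "l * (a * ln m + (a - m)) + (1-l) * (b * ln m + (b - m)) = m * ln m"
      by (simp add: m_def algebra_simps)
    also have "m * ln m = plogp m" using mp by (simp add: plogp_def)
    finally show ?thesis by (simp add: m_def)
  qed
  show "plogp (l*a + (1-l)*b) \<le> l * plogp a + (1-l) * plogp b"
    using \<open>a \<noteq> b \<Longrightarrow> _\<close> by (cases "a = b") (auto simp: algebra_simps)
qed


locale fe =
  fixes \<Omega> :: "'a::metric_space set" and M :: "'a measure" and K :: "'a \<Rightarrow> 'a \<Rightarrow> real"
  assumes cpt: "compact \<Omega>" and sets_M: "sets M = sets (restrict_space borel \<Omega>)"
    and sp: "space M = \<Omega>" and fin: "finite_measure M"
    and contK: "continuous_on (\<Omega> \<times> \<Omega>) (\<lambda>(x, y). K x y)"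
begin

lemma meas_cont: "continuous_on \<Omega> f \<Longrightarrow> (f::'a\<Rightarrow>real) \<in> borel_measurable M"
  using borel_measurable_continuous_on_restrict[of \<Omega> f] measurable_cong_sets[OF sets_M refl, of borel]
  by blast

lemma Kbound: obtains B where "\<And>x y. x\<in>\<Omega> \<Longrightarrow> y\<in>\<Omega> \<Longrightarrow> \<bar>K x y\<bar> \<le> B" "0 \<le> B"
proof -
  have "bounded ((\<lambda>(x,y). K x y) ` (\<Omega> \<times> \<Omega>))"
    by (intro compact_imp_bounded compact_continuous_image contK compact_Times cpt)
  then obtain B where B: "\<forall>z\<in>(\<lambda>(x,y). K x y) ` (\<Omega> \<times> \<Omega>). norm z \<le> B" by (auto simp: bounded_iff)
  show thesis
  proof (rule that[of "max B 0"])
    fix x y assume "x \<in> \<Omega>" "y \<in> \<Omega>"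
    then have "norm (K x y) \<le> B" using B by force
    then show "\<bar>K x y\<bar> \<le> max B 0" by simp
  qed simp
qed

lemma contKx: assumes "y \<in> \<Omega>" shows "continuous_on \<Omega> (\<lambda>x. K x y)"
proof -
  have "continuous_on \<Omega> (\<lambda>x. (\<lambda>(x,y). K x y) (x, y))"
    by (rule continuous_on_compose2[OF contK]) (auto intro!: continuous_intros simp: assms)
  then show ?thesis by simp
qed

definition "Lf p y = (\<integral>x. K x y * p x \<partial>M)"

lemma intKp: assumes "integrable M p" "y\<in>\<Omega>" shows "integrable M (\<lambda>x. K x y * p x)"
proof -
  obtain B where B: "\<And>x y. x\<in>\<Omega> \<Longrightarrow> y\<in>\<Omega> \<Longrightarrow> \<bar>K x y\<bar> \<le> B" "0 \<le> B" by (metis Kbound)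
  show ?thesis
  proof (rule Bochner_Integration.integrable_bound[where f="\<lambda>x. B * p x"])
    show "integrable M (\<lambda>x. B * p x)" using assms by simp
    show "(\<lambda>x. K x y * p x) \<in> borel_measurable M"
      using meas_cont[OF contKx[OF assms(2)]] borel_measurable_integrable[OF assms(1)] by measurable
    show "AE x in M. norm (K x y * p x) \<le> norm (B * p x)"
      using B assms(2) by (intro AE_I2) (auto simp: sp abs_mult intro!: mult_right_mono)
  qed
qed

lemma Lf_cont: assumes p: "integrable M p" shows "continuous_on \<Omega> (Lf p)"
  unfolding continuous_on_iff
proof (intro ballI allI impI)
  fix y e assume y: "y \<in> \<Omega>" and e: "(0::real) < e"
  define C where "C = (\<integral>x. \<bar>p x\<bar> \<partial>M) + 1"
  have C0: "(\<integral>x. \<bar>p x\<bar> \<partial>M) \<ge> 0" by (rule integral_nonneg_AE) simp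
  have Cp: "C > 0" using C0 unfolding C_def by linarith
  have uc: "uniformly_continuous_on (\<Omega> \<times> \<Omega>) (\<lambda>(x, y). K x y)"
    by (rule compact_uniformly_continuous[OF contK compact_Times[OF cpt cpt]])
  have eC: "e / C > 0" using e Cp by simp
  obtain d where d: "d > 0" "\<forall>a\<in>\<Omega>\<times>\<Omega>. \<forall>b\<in>\<Omega>\<times>\<Omega>. dist b a < d \<longrightarrow>
       dist ((\<lambda>(x,y). K x y) b) ((\<lambda>(x,y). K x y) a) < e / C"
    using uc eC unfolding uniformly_continuous_on_def by metis
  show "\<exists>d>0. \<forall>y'\<in>\<Omega>. dist y' y < d \<longrightarrow> dist (Lf p y') (Lf p y) < e"
  proof (intro exI[of _ d] conjI ballI impI)
    show "d > 0" by fact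
    fix y' assume y': "y' \<in> \<Omega>" "dist y' y < d"
    have pt: "\<bar>K x y' * p x - K x y * p x\<bar> \<le> e / C * \<bar>p x\<bar>" if x: "x \<in> space M" for x
    proof -
      have "dist (x, y') (x, y) = dist y' y" by (simp add: dist_Pair_Pair)
      then have "dist (K x y') (K x y) < e / C" using d x y y' by (auto simp: sp)
      then have "\<bar>K x y' - K x y\<bar> \<le> e / C" by (simp add: dist_real_def)
      then have "\<bar>K x y' - K x y\<bar> * \<bar>p x\<bar> \<le> e / C * \<bar>p x\<bar>" by (rule mult_right_mono) simp
      then show ?thesis by (simp add: abs_mult[symmetric] left_diff_distrib)
    qed
    have eq: "Lf p y' - Lf p y = (\<integral>x. K x y' * p x - K x y * p x \<partial>M)"
      unfolding Lf_def using intKp[OF p y'(1)] intKp[OF p y] by simp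
    have "\<bar>Lf p y' - Lf p y\<bar> \<le> (\<integral>x. \<bar>K x y' * p x - K x y * p x\<bar> \<partial>M)"
      unfolding eq by (rule integral_abs_bound)
    also have "\<dots> \<le> (\<integral>x. e / C * \<bar>p x\<bar> \<partial>M)"
      by (rule integral_mono) (use pt intKp[OF p y'(1)] intKp[OF p y] p in auto)
    also have "\<dots> = e / C * (\<integral>x. \<bar>p x\<bar> \<partial>M)" by simp
    also have "\<dots> < e / C * C" using eC by (intro mult_strict_left_mono) (auto simp: C_def)
    also have "\<dots> = e" using Cp by simp
    finally show "dist (Lf p y') (Lf p y) < e" by (simp add: dist_real_def)
  qed
qed

lemma Lf_bounded: assumes p: "integrable M p" shows "\<exists>C. \<forall>y\<in>\<Omega>. \<bar>Lf p y\<bar> \<le> C"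
proof -
  obtain B where B: "\<And>x y. x\<in>\<Omega> \<Longrightarrow> y\<in>\<Omega> \<Longrightarrow> \<bar>K x y\<bar> \<le> B" "0 \<le> B" by (metis Kbound)
  have "\<bar>Lf p y\<bar> \<le> (\<integral>x. B * \<bar>p x\<bar> \<partial>M)" if y: "y \<in> \<Omega>" for y
  proof -
    have "\<bar>Lf p y\<bar> \<le> (\<integral>x. \<bar>K x y * p x\<bar> \<partial>M)" unfolding Lf_def by (rule integral_abs_bound)
    also have "\<dots> \<le> (\<integral>x. B * \<bar>p x\<bar> \<partial>M)"
    proof (rule integral_mono)
      show "integrable M (\<lambda>x. \<bar>K x y * p x\<bar>)" using intKp[OF p y] by (rule integrable_abs)
      show "integrable M (\<lambda>x. B * \<bar>p x\<bar>)" using p by simp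
      fix x assume "x \<in> space M"
      then show "\<bar>K x y * p x\<bar> \<le> B * \<bar>p x\<bar>" using B y sp by (simp add: abs_mult mult_right_mono)
    qed
    finally show ?thesis .
  qed
  then show ?thesis by blast
qed

lemma Z_integrable: assumes p: "integrable M p"
  shows "integrable M (\<lambda>y. exp (\<beta> * Lf p y))"
proof -
  obtain C where C: "\<And>y. y\<in>\<Omega> \<Longrightarrow> \<bar>Lf p y\<bar> \<le> C" using Lf_bounded[OF p] by blast
  show ?thesis
  proof (rule finite_measure.integrable_const_bound[OF fin, where B="exp (\<bar>\<beta>\<bar> * C)"])
    show "AE y in M. norm (exp (\<beta> * Lf p y)) \<le> exp (\<bar>\<beta>\<bar> * C)"
    proof (rule AE_I2)
      fix y assume "y \<in> space M"
      then have "\<bar>Lf p y\<bar> \<le> C" using C sp by auto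
      have "\<beta> * Lf p y \<le> \<bar>\<beta> * Lf p y\<bar>" by (rule abs_ge_self)
      also have "\<dots> = \<bar>\<beta>\<bar> * \<bar>Lf p y\<bar>" by (rule abs_mult)
      also have "\<dots> \<le> \<bar>\<beta>\<bar> * C" by (rule mult_left_mono) (use \<open>\<bar>Lf p y\<bar> \<le> C\<close> in auto)
      finally have "\<beta> * Lf p y \<le> \<bar>\<beta>\<bar> * C" .
      then show "norm (exp (\<beta> * Lf p y)) \<le> exp (\<bar>\<beta>\<bar> * C)" by simp
    qed
    show "(\<lambda>y. exp (\<beta> * Lf p y)) \<in> borel_measurable M"
      by (rule meas_cont) (intro continuous_intros Lf_cont p)
  qed
qed

lemma Z_pos: assumes p: "integrable M p" and m: "0 < measure M \<Omega>"
  shows "0 < (\<integral>y. exp (\<beta> * Lf p y) \<partial>M)"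
proof -
  obtain C where C: "\<And>y. y\<in>\<Omega> \<Longrightarrow> \<bar>Lf p y\<bar> \<le> C" using Lf_bounded[OF p] by blast
  have "(\<integral>y. exp (- (\<bar>\<beta>\<bar> * C)) \<partial>M) \<le> (\<integral>y. exp (\<beta> * Lf p y) \<partial>M)"
  proof (rule integral_mono)
    show "integrable M (\<lambda>y. exp (- (\<bar>\<beta>\<bar> * C)))" using finite_measure.integrable_const[OF fin] .
    show "integrable M (\<lambda>y. exp (\<beta> * Lf p y))" by (rule Z_integrable[OF p])
    fix y assume "y \<in> space M"
    then have "\<bar>Lf p y\<bar> \<le> C" using C sp by auto
    have "\<bar>\<beta>\<bar> * \<bar>Lf p y\<bar> \<le> \<bar>\<beta>\<bar> * C" by (rule mult_left_mono) (use \<open>\<bar>Lf p y\<bar> \<le> C\<close> in auto)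
    moreover have "- \<bar>\<beta> * Lf p y\<bar> \<le> \<beta> * Lf p y" by simp
    ultimately have "- (\<bar>\<beta>\<bar> * C) \<le> \<beta> * Lf p y" by (simp add: abs_mult)
    then show "exp (- (\<bar>\<beta>\<bar> * C)) \<le> exp (\<beta> * Lf p y)" by simp
  qed
  moreover have "0 < (\<integral>y. exp (- (\<bar>\<beta>\<bar> * C)) \<partial>M)" using m by (simp add: sp)
  ultimately show ?thesis by linarith
qed

end

theorem proposition1:
  fixes \<Omega> :: "'a::metric_space set" and M :: "'a measure"
    and K :: "'a \<Rightarrow> 'a \<Rightarrow> real" and \<beta> lam :: real and p1 p2 :: "'a \<Rightarrow> real"
  assumes "compact \<Omega>"
    and "sets M = sets (restrict_space borel \<Omega>)" and "space M = \<Omega>"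
    and "finite_measure M"
    and "continuous_on (\<Omega> \<times> \<Omega>) (\<lambda>(x, y). K x y)"
    and "\<beta> > 0"
    and "is_density M p1" and "is_density M p2"
    and "\<not> (AE x in M. p1 x = p2 x)"
    and "entropy M p1 < \<infinity>" and "entropy M p2 < \<infinity>"
    and "0 < lam" and "lam < 1"
  shows "free_energy M K \<beta> (\<lambda>x. lam * p1 x + (1 - lam) * p2 x)
         < ereal lam * free_energy M K \<beta> p1 + ereal (1 - lam) * free_energy M K \<beta> p2"
proof -
  interpret fe \<Omega> M K by (rule fe.intro[OF assms(1-5)])
  have fin: "finite_measure M" by fact
  note sp = assms(3)
  have bp: "\<beta> > 0" and l0: "0 < lam" and l1: "lam < 1" by fact+
  have p1m[measurable]: "p1 \<in> borel_measurable M" and p1i: "integrable M p1"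
    and p1n: "\<And>x. x \<in> space M \<Longrightarrow> 0 \<le> p1 x" and p1I: "(\<integral>x. p1 x \<partial>M) = 1"
    using assms(7) unfolding is_density_def by auto
  have p2m[measurable]: "p2 \<in> borel_measurable M" and p2i: "integrable M p2"
    and p2n: "\<And>x. x \<in> space M \<Longrightarrow> 0 \<le> p2 x"
    using assms(8) unfolding is_density_def by auto
  define pl where "pl x = lam * p1 x + (1 - lam) * p2 x" for x
  have plm[measurable]: "pl \<in> borel_measurable M" unfolding pl_def by measurable
  have pli: "integrable M pl" unfolding pl_def using p1i p2i by simp
  have pln: "0 \<le> pl x" if "x \<in> space M" for x
    unfolding pl_def using p1n[OF that] p2n[OF that] l0 l1 by simp
  have mpos: "0 < measure M \<Omega>"
  proof (rule ccontr)
    assume "\<not> 0 < measure M \<Omega>"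
    then have "measure M (space M) = 0" using sp by (simp add: measure_nonneg order.antisym)
    then have "emeasure M (space M) = 0" using finite_measure.emeasure_eq_measure[OF fin] by simp
    then have "AE x in M. p1 x = 0" by (intro AE_I[of _ _ "space M"]) auto
    then have "(\<integral>x. p1 x \<partial>M) = 0" by (rule integral_eq_zero_AE)
    then show False using p1I by simp
  qed
  define A where "A = partition_fn M K \<beta> p1"
  define B where "B = partition_fn M K \<beta> p2"
  define Zl where "Zl = partition_fn M K \<beta> pl"
  have pf: "partition_fn M K \<beta> p = (\<integral>y. exp (\<beta> * Lf p y) \<partial>M)" for p
    unfolding partition_fn_def Lf_def by simp
  have Ap: "A > 0" unfolding A_def pf by (rule Z_pos[OF p1i mpos])
  have Bp: "B > 0" unfolding B_def pf by (rule Z_pos[OF p2i mpos])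
  have Zlp: "Zl > 0" unfolding Zl_def pf by (rule Z_pos[OF pli mpos])
  have Llin: "Lf pl y = lam * Lf p1 y + (1 - lam) * Lf p2 y" if y: "y \<in> \<Omega>" for y
  proof -
    have "Lf pl y = (\<integral>x. lam * (K x y * p1 x) + (1 - lam) * (K x y * p2 x) \<partial>M)"
      unfolding Lf_def pl_def by (simp add: algebra_simps)
    also have "\<dots> = lam * Lf p1 y + (1 - lam) * Lf p2 y"
      unfolding Lf_def using intKp[OF p1i y] intKp[OF p2i y] by simp
    finally show ?thesis .
  qed
  define C where "C = exp (lam * ln A + (1 - lam) * ln B)"
  have Cp: "C > 0" unfolding C_def by simp
  have pw: "exp (\<beta> * Lf pl y) \<le> C * (lam * (exp (\<beta> * Lf p1 y) / A) + (1 - lam) * (exp (\<beta> * Lf p2 y) / B))"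
    if y: "y \<in> space M" for y
  proof -
    define u where "u = \<beta> * Lf p1 y - ln A"
    define v where "v = \<beta> * Lf p2 y - ln B"
    have "exp ((1 - (1 - lam)) *\<^sub>R u + (1 - lam) *\<^sub>R v) \<le> (1 - (1 - lam)) * exp u + (1 - lam) * exp v"
      using l0 l1 by (intro convex_onD[OF exp_convex]) auto
    then have cv: "exp (lam * u + (1 - lam) * v) \<le> lam * exp u + (1 - lam) * exp v" by simp
    have "lam * u + (1 - lam) * v = \<beta> * Lf pl y - (lam * ln A + (1 - lam) * ln B)"
    proof -
      have Ly: "Lf pl y = lam * Lf p1 y + (1 - lam) * Lf p2 y" using Llin y sp by simp
      show ?thesis unfolding u_def v_def Ly by (simp add: algebra_simps)
    qed
    then have "exp (lam * u + (1 - lam) * v) = exp (\<beta> * Lf pl y) / C"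
      unfolding C_def by (simp add: exp_diff)
    moreover have "exp u = exp (\<beta> * Lf p1 y) / A" unfolding u_def using Ap by (simp add: exp_diff)
    moreover have "exp v = exp (\<beta> * Lf p2 y) / B" unfolding v_def using Bp by (simp add: exp_diff)
    ultimately have "exp (\<beta> * Lf pl y) / C \<le> lam * (exp (\<beta> * Lf p1 y) / A) + (1 - lam) * (exp (\<beta> * Lf p2 y) / B)"
      using cv by simp
    then show ?thesis using Cp by (simp add: divide_le_eq mult.commute)
  qed
  have "Zl \<le> (\<integral>y. C * (lam * (exp (\<beta> * Lf p1 y) / A) + (1 - lam) * (exp (\<beta> * Lf p2 y) / B)) \<partial>M)"
    unfolding Zl_def pf
    by (rule integral_mono) (use pw Z_integrable[OF pli] Z_integrable[OF p1i] Z_integrable[OF p2i] in auto)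
  also have "\<dots> = C * (lam * (A / A) + (1 - lam) * (B / B))"
    using Z_integrable[OF p1i, of \<beta>] Z_integrable[OF p2i, of \<beta>]
    by (simp add: A_def B_def pf)
  also have "\<dots> = C" using Ap Bp by simp
  finally have "Zl \<le> C" .
  then have lnZ: "ln Zl \<le> lam * ln A + (1 - lam) * ln B"
    using Zlp Cp unfolding C_def by (metis ln_exp ln_le_cancel_iff)
  have e1: "integrable M (\<lambda>x. plogp (p1 x))"
    using assms(10) unfolding entropy_def by (auto split: if_splits)
  have e2: "integrable M (\<lambda>x. plogp (p2 x))"
    using assms(11) unfolding entropy_def by (auto split: if_splits)
  have plogp_lb: "plogp t \<ge> -1" if "t \<ge> 0" for t
    using plogp_ge(1)[OF that, of 1] that by simp
  have cvx: "plogp (pl x) \<le> lam * plogp (p1 x) + (1 - lam) * plogp (p2 x)" if "x \<in> space M" for x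
    unfolding pl_def using plogp_convex(1)[OF p1n[OF that] p2n[OF that] l0 l1] .
  have plogm: "(\<lambda>x. plogp (f x)) \<in> borel_measurable M" if [measurable]: "f \<in> borel_measurable M" for f
    unfolding plogp_def by measurable
  have el: "integrable M (\<lambda>x. plogp (pl x))"
  proof (rule Bochner_Integration.integrable_bound[where f="\<lambda>x. 1 + \<bar>plogp (p1 x)\<bar> + \<bar>plogp (p2 x)\<bar>"])
    show "integrable M (\<lambda>x. 1 + \<bar>plogp (p1 x)\<bar> + \<bar>plogp (p2 x)\<bar>)"
    proof -
      have c: "integrable M (\<lambda>x. 1::real)" by (rule finite_measure.integrable_const[OF fin])
      show ?thesis by (intro Bochner_Integration.integrable_add integrable_abs c e1 e2)
    qed
    show "(\<lambda>x. plogp (pl x)) \<in> borel_measurable M" by (rule plogm) measurable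
    show "AE x in M. norm (plogp (pl x)) \<le> norm (1 + \<bar>plogp (p1 x)\<bar> + \<bar>plogp (p2 x)\<bar>)"
    proof (rule AE_I2)
      fix x assume x: "x \<in> space M"
      have a: "plogp (pl x) \<ge> -1" using plogp_lb pln[OF x] by simp
      have b: "plogp (pl x) \<le> \<bar>plogp (p1 x)\<bar> + \<bar>plogp (p2 x)\<bar>"
      proof -
        have "lam * plogp (p1 x) \<le> lam * \<bar>plogp (p1 x)\<bar>" using l0 by (intro mult_left_mono) auto
        also have "\<dots> \<le> \<bar>plogp (p1 x)\<bar>" using l0 l1 by (intro mult_left_le_one_le) auto
        finally have "lam * plogp (p1 x) \<le> \<bar>plogp (p1 x)\<bar>" .
        moreover have "(1 - lam) * plogp (p2 x) \<le> \<bar>plogp (p2 x)\<bar>"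
        proof -
          have "(1 - lam) * plogp (p2 x) \<le> (1 - lam) * \<bar>plogp (p2 x)\<bar>" using l1 by (intro mult_left_mono) auto
          also have "\<dots> \<le> \<bar>plogp (p2 x)\<bar>" using l0 l1 by (intro mult_left_le_one_le) auto
          finally show ?thesis .
        qed
        ultimately show ?thesis using cvx[OF x] by linarith
      qed
      show "norm (plogp (pl x)) \<le> norm (1 + \<bar>plogp (p1 x)\<bar> + \<bar>plogp (p2 x)\<bar>)"
        using a b by simp
    qed
  qed
  define D where "D x = lam * plogp (p1 x) + (1 - lam) * plogp (p2 x) - plogp (pl x)" for x
  have Di: "integrable M D" unfolding D_def using e1 e2 el by simp
  have Dn: "AE x in M. 0 \<le> D x" using cvx by (intro AE_I2) (simp add: D_def)
  have "integral\<^sup>L M D \<noteq> 0"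
  proof
    assume "integral\<^sup>L M D = 0"
    then have "AE x in M. D x = 0" using integral_nonneg_eq_0_iff_AE[OF Di Dn] by simp
    then have "AE x in M. p1 x = p2 x"
    proof (rule AE_mp[OF _ AE_I2])
      fix x assume x: "x \<in> space M"
      show "D x = 0 \<longrightarrow> p1 x = p2 x"
        using plogp_convex(2)[OF p1n[OF x] p2n[OF x] l0 l1] unfolding D_def pl_def by force
    qed
    then show False using assms(9) by simp
  qed
  moreover have "integral\<^sup>L M D \<ge> 0" using Dn by (rule integral_nonneg_AE)
  ultimately have Dpos: "integral\<^sup>L M D > 0" by simp
  define S1 where "S1 = (\<integral>x. plogp (p1 x) \<partial>M)"
  define S2 where "S2 = (\<integral>x. plogp (p2 x) \<partial>M)"
  define Sl where "Sl = (\<integral>x. plogp (pl x) \<partial>M)"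
  have "integral\<^sup>L M D = lam * S1 + (1 - lam) * S2 - Sl"
    unfolding D_def S1_def S2_def Sl_def using e1 e2 el by simp
  with Dpos have Slt: "Sl < lam * S1 + (1 - lam) * S2" by simp
  have ent1: "entropy M p1 = ereal S1" using e1 unfolding entropy_def S1_def by simp
  have ent2: "entropy M p2 = ereal S2" using e2 unfolding entropy_def S2_def by simp
  have entl: "entropy M pl = ereal Sl" using el unfolding entropy_def Sl_def by simp
  have F1: "free_energy M K \<beta> p1 = ereal (ln A / \<beta> + S1 / \<beta>)"
    unfolding free_energy_def ent1 A_def using bp by simp
  have F2: "free_energy M K \<beta> p2 = ereal (ln B / \<beta> + S2 / \<beta>)"
    unfolding free_energy_def ent2 B_def using bp by simp
  have Fl: "free_energy M K \<beta> pl = ereal (ln Zl / \<beta> + Sl / \<beta>)"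
    unfolding free_energy_def entl Zl_def using bp by simp
  have "ln Zl + Sl < lam * (ln A + S1) + (1 - lam) * (ln B + S2)"
    using lnZ Slt by (simp add: algebra_simps)
  then have "(ln Zl + Sl) / \<beta> < (lam * (ln A + S1) + (1 - lam) * (ln B + S2)) / \<beta>"
    using bp by (simp add: divide_strict_right_mono)
  then have "ln Zl / \<beta> + Sl / \<beta> < lam * (ln A / \<beta> + S1 / \<beta>) + (1 - lam) * (ln B / \<beta> + S2 / \<beta>)"
    by (simp add: add_divide_distrib diff_divide_distrib algebra_simps)
  then show ?thesis
    using F1 F2 Fl unfolding pl_def[abs_def] by simp
qed

end
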